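(* Let $(U_n)_{n\ge1}$ and $(V_n)_{n\ge1}$ be sequences in $\mathcal{D}$ converging in $\tau_{\mathcal{D}}$ to $U\in\mathcal{D}$ and $V\in\mathcal{D}$ respectively, and suppose $U_n\ge_sV_n$ for all $n$. Then $U\ge_sV$.
   Context: $\mathcal{D}$ is the set of non-increasing càdlàg functions $U:\mathbb{R}\to[0,1]$ with $\lim_{x\to-\infty}U(x)=1$ and $\lim_{x\to\infty}U(x)=0$. The topology $\tau_{\mathcal{D}}$: $U_n\to U$ iff $U_n(x)\to U(x)$ at every continuity point $x$ of $U$ (this is the image of the weak topology on probability measures under $\mu\mapsto(x\mapsto\mu((x,\infty)))$). For $U,V\in\mathcal{D}$, $U\ge_sV$ ("$U$ is more stretched than $V$") means: for every $c\in\mathbb{R}$ and $x_1\le x_2$, $U(x_1)>V(x_1+c)$ implies $U(x_2)\ge V(x_2+c)$. *)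

theory Defs
  imports "HOL-Analysis.Analysis"
begin

definition in_D :: "(real \<Rightarrow> real) \<Rightarrow> bool" where
  "in_D U \<longleftrightarrow>
     (\<forall>x y. x \<le> y \<longrightarrow> U y \<le> U x) \<and>
     (\<forall>x. U x \<in> {0..1}) \<and>
     (\<forall>x. continuous (at_right x) U) \<and>
     (\<forall>x. \<exists>l. (U \<longlongrightarrow> l) (at_left x)) \<and>
     (U \<longlongrightarrow> 1) at_bot \<and>
     (U \<longlongrightarrow> 0) at_top"

definition tauD_converges :: "(nat \<Rightarrow> real \<Rightarrow> real) \<Rightarrow> (real \<Rightarrow> real) \<Rightarrow> bool" where
  "tauD_converges Us U \<longleftrightarrow> (\<forall>x. isCont U x \<longrightarrow> (\<lambda>n. Us n x) \<longlonglongrightarrow> U x)"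

definition more_stretched :: "(real \<Rightarrow> real) \<Rightarrow> (real \<Rightarrow> real) \<Rightarrow> bool" where
  "more_stretched U V \<longleftrightarrow>
     (\<forall>c x1 x2. x1 \<le> x2 \<longrightarrow> U x1 > V (x1 + c) \<longrightarrow> U x2 \<ge> V (x2 + c))"

end

theory Submission
  imports Defs
begin

lemma D_ctble:
  assumes "in_D U"
  shows "countable {a. \<not> isCont U a}"
proof -
  have mU: "mono (\<lambda>x. - U x)" using assms unfolding in_D_def mono_def by auto
  then show ?thesis
  proof -
    have "isCont (\<lambda>x. - U x) a \<longleftrightarrow> isCont U a" for a
      using Limits.isCont_minus[where f="\<lambda>x. - U x" and a=a] Limits.isCont_minus[where f=U and a=a] by auto
    then show ?thesis using mono_ctble_discont[OF mU] by simp
  qed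
qed

lemma pick:
  fixes a b :: real
  assumes "a < b" "countable A"
  obtains y where "a < y" "y < b" "y \<notin> A"
  using open_minus_countable[OF assms(2), of "{a<..<b}"] assms(1) by auto

theorem lemma2p1:
  fixes Us Vs :: "nat \<Rightarrow> real \<Rightarrow> real" and U V :: "real \<Rightarrow> real"
  assumes "\<And>n. n \<ge> 1 \<Longrightarrow> in_D (Us n)"
      and "\<And>n. n \<ge> 1 \<Longrightarrow> in_D (Vs n)"
      and "in_D U" and "in_D V"
      and "tauD_converges Us U" and "tauD_converges Vs V"
      and "\<And>n. n \<ge> 1 \<Longrightarrow> more_stretched (Us n) (Vs n)"
  shows "more_stretched U V"
  unfolding more_stretched_def
proof (intro allI impI, rule ccontr)
  fix c x1 x2 :: real
  assume x12: "x1 \<le> x2" and h1: "V (x1 + c) < U x1" and "\<not> V (x2 + c) \<le> U x2"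
  hence h2: "U x2 < V (x2 + c)" by simp
  have monoU: "\<And>x y. x \<le> y \<Longrightarrow> U y \<le> U x" and monoV: "\<And>x y. x \<le> y \<Longrightarrow> V y \<le> V x"
    using assms(3,4) unfolding in_D_def by auto
  have rcU: "continuous (at_right x1) U" using assms(3) unfolding in_D_def by auto
  have cU: "countable {a. \<not> isCont U a}" and cV: "countable {a. \<not> isCont V a}"
    using D_ctble assms(3,4) by auto
  have "x1 \<noteq> x2" using h1 h2 by auto
  with x12 have lt: "x1 < x2" by simp
  define g where "g = U x1 - V (x1 + c)"
  have gpos: "g > 0" using h1 g_def by simp
  have "(U \<longlongrightarrow> U x1) (at_right x1)" using rcU
    by (simp add: continuous_within)
  then have "\<forall>\<^sub>F y in at_right x1. dist (U y) (U x1) < g" using gpos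
    by (simp add: tendsto_iff)
  then obtain b where b: "b > x1" "\<forall>y>x1. y < b \<longrightarrow> dist (U y) (U x1) < g"
    unfolding eventually_at_right_field by blast
  define e0 where "e0 = b - x1"
  have e0: "e0 > 0" "\<And>y. x1 < y \<Longrightarrow> y < x1 + e0 \<Longrightarrow> dist (U y) (U x1) < g"
    using b e0_def by auto
  define e where "e = min e0 (x2 - x1)"
  have e: "e > 0" using e0 lt e_def by simp
  obtain y1 where y1: "x1 < y1" "y1 < x1 + e" "y1 \<notin> {a. \<not> isCont U a}"
    using pick[OF _ cU, of x1 "x1 + e"] e by auto
  have "y1 < x1 + e0" using y1 e_def by simp
  then have "\<bar>U y1 - U x1\<bar> < g" using e0(2)[of y1] y1 by (simp add: dist_real_def)
  then have Uy1: "U y1 > V (x1 + c)" using g_def by linarith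
  obtain z1 where z1: "x1 + c < z1" "z1 < x1 + c + (y1 - x1)" "z1 \<notin> {a. \<not> isCont V a}"
    using pick[OF _ cV, of "x1 + c" "x1 + c + (y1 - x1)"] y1 by auto
  define c' where "c' = z1 - y1"
  have c'c: "c' < c" using z1 c'_def by simp
  have Vz1: "V z1 < U y1" using monoV[of "x1 + c" z1] z1 Uy1 by simp
  have cnt2: "countable ({a. \<not> isCont U a} \<union> (\<lambda>a. a - c') ` {a. \<not> isCont V a})"
    using cU cV by auto
  obtain y2 where y2: "x2 < y2" "y2 < x2 + (c - c')"
    "y2 \<notin> {a. \<not> isCont U a} \<union> (\<lambda>a. a - c') ` {a. \<not> isCont V a}"
    using pick[OF _ cnt2, of x2 "x2 + (c - c')"] c'c by auto
  have cy2: "isCont U y2" and cz2: "isCont V (y2 + c')"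
  proof -
    have "y2 + c' \<notin> {a. \<not> isCont V a}"
    proof
      assume "y2 + c' \<in> {a. \<not> isCont V a}"
      then have "(y2 + c') - c' \<in> (\<lambda>a. a - c') ` {a. \<not> isCont V a}" by blast
      then show False using y2(3) by simp
    qed
    then show "isCont U y2" "isCont V (y2 + c')" using y2(3) by auto
  qed
  have Vy2: "U y2 < V (y2 + c')"
    using monoU[of x2 y2] monoV[of "y2 + c'" "x2 + c"] y2 h2 by simp
  have L1: "(\<lambda>n. Us n y1 - Vs n z1) \<longlonglongrightarrow> U y1 - V z1"
    using assms(5,6) y1(3) z1(3) unfolding tauD_converges_def by (auto intro!: tendsto_diff)
  have L2: "(\<lambda>n. Vs n (y2 + c') - Us n y2) \<longlonglongrightarrow> V (y2 + c') - U y2"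
    using assms(5,6) cy2 cz2 unfolding tauD_converges_def by (auto intro!: tendsto_diff)
  have E1: "\<forall>\<^sub>F n in sequentially. Us n y1 - Vs n z1 > 0"
    using order_tendstoD(1)[OF L1, of 0] Vz1 by simp
  have E2: "\<forall>\<^sub>F n in sequentially. Vs n (y2 + c') - Us n y2 > 0"
    using order_tendstoD(1)[OF L2, of 0] Vy2 by simp
  have E3: "\<forall>\<^sub>F n in sequentially. n \<ge> (1::nat)" by (rule eventually_ge_at_top)
  from eventually_conj[OF E1 eventually_conj[OF E2 E3]] obtain n where
    n: "Us n y1 - Vs n z1 > 0" "Vs n (y2 + c') - Us n y2 > 0" "n \<ge> 1"
    by (metis (mono_tags, lifting) eventually_sequentially order_refl)
  have ms: "more_stretched (Us n) (Vs n)" using assms(7) n(3) by simp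
  have "y1 \<le> y2" using y1 y2 e_def by simp
  moreover have "Vs n (y1 + c') < Us n y1" using n(1) c'_def by simp
  ultimately have "Vs n (y2 + c') \<le> Us n y2" using ms unfolding more_stretched_def by blast
  with n(2) show False by simp
qed

end
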